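(* Let $\mu$ be the Cauchy distribution $d\mu(x)=\frac1\pi\frac{dx}{1+x^2}$ and $t>0$. Then for $u\in\mathbb R$, \[\frac{d\psi_{t}}{du}(u)=\frac{t+4v^2(1+v)^2}{(1+v)(t+2v^2(1+v))},\qquad v=v_{t}(u).\]
   Context: $v_t(u)=\inf\{v>0:\int\frac{d\mu(x)}{(u-x)^2+v^2}\le\frac1t\}$; $H_t(z)=z+t\int\frac{d\mu(x)}{z-x}$; $\psi_t(u)=H_t(u+iv_t(u))=u+t\int\frac{(u-x)\,d\mu(x)}{(u-x)^2+v_t(u)^2}$. *)

theory Defs
  imports "HOL-Probability.Probability"
begin

definition cauchy_measure :: "real measure" where
  "cauchy_measure = density lborel (\<lambda>x. ennreal (1 / (pi * (1 + x\<^sup>2))))"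

definition v_t :: "real measure \<Rightarrow> real \<Rightarrow> real \<Rightarrow> real" where
  "v_t \<mu> t u = Inf {v. v > 0 \<and> (\<integral>x. 1 / ((u - x)\<^sup>2 + v\<^sup>2) \<partial>\<mu>) \<le> 1 / t}"

definition psi_t :: "real measure \<Rightarrow> real \<Rightarrow> real \<Rightarrow> real" where
  "psi_t \<mu> t u = u + t * (\<integral>x. (u - x) / ((u - x)\<^sup>2 + (v_t \<mu> t u)\<^sup>2) \<partial>\<mu>)"

end

theory Submission
  imports Defs "HOL-Real_Asymp.Real_Asymp"
begin

lemma FTC_UNIV_nonneg:
  fixes f F :: "real \<Rightarrow> real"
  assumes "\<And>x. (F has_real_derivative f x) (at x)" "\<And>x. isCont f x" "\<And>x. 0 \<le> f x"
    "(F \<longlongrightarrow> A) at_bot" "(F \<longlongrightarrow> B) at_top"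
  shows "integrable lborel f" "integral\<^sup>L lborel f = B - A"
proof -
  have *: "set_integrable lborel (einterval (-\<infinity>) \<infinity>) f" "(LBINT x=-\<infinity>..\<infinity>. f x) = B - A"
    by (rule interval_integral_FTC_nonneg[where F=F]; (use assms in \<open>auto simp: ereal_tendsto_simps\<close>))+
  from *(1) show "integrable lborel f" by (simp add: set_integrable_def)
  from *(2) show "integral\<^sup>L lborel f = B - A" by (simp add: interval_lebesgue_integral_def set_lebesgue_integral_def)
qed

lemma FTC_UNIV_integrable:
  fixes f F :: "real \<Rightarrow> real"
  assumes "\<And>x. (F has_real_derivative f x) (at x)" "\<And>x. isCont f x" "integrable lborel f"
    "(F \<longlongrightarrow> A) at_bot" "(F \<longlongrightarrow> B) at_top"
  shows "integral\<^sup>L lborel f = B - A"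
proof -
  have "(LBINT x=-\<infinity>..\<infinity>. f x) = B - A"
    by (rule interval_integral_FTC_integrable[where F=F]; 
        use assms in \<open>auto simp: ereal_tendsto_simps set_integrable_def has_real_derivative_iff_has_vector_derivative\<close>)
  then show ?thesis by (simp add: interval_lebesgue_integral_def set_lebesgue_integral_def)
qed

lemma darc: fixes a b x :: real assumes "b > 0"
  shows "((\<lambda>y. arctan ((y - a) / b)) has_real_derivative b / ((x - a)\<^sup>2 + b\<^sup>2)) (at x)"
proof -
  have p: "(x - a)\<^sup>2 + b\<^sup>2 > 0" using assms by (simp add: add_nonneg_pos)
  have e: "1 + ((x - a) / b)\<^sup>2 = ((x - a)\<^sup>2 + b\<^sup>2) / b\<^sup>2" using assms by (simp add: field_simps power2_eq_square)
  have "((\<lambda>y. arctan ((y - a) / b)) has_real_derivative inverse (1 + ((x - a) / b)\<^sup>2) * (1 / b)) (at x)"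
    using assms by (auto intro!: derivative_eq_intros)
  moreover have "inverse (1 + ((x - a) / b)\<^sup>2) * (1 / b) = b / ((x - a)\<^sup>2 + b\<^sup>2)"
    unfolding e using assms p by (simp add: field_simps power2_eq_square)
  ultimately show ?thesis by simp
qed
lemma dln: fixes a b x :: real assumes "b > 0"
  shows "((\<lambda>y. ln ((y - a)\<^sup>2 + b)) has_real_derivative (2 * (x - a)) / ((x - a)\<^sup>2 + b)) (at x)"
proof -
  have p: "(x - a)\<^sup>2 + b > 0" using assms by (simp add: add_nonneg_pos)
  show ?thesis
    using p by (auto intro!: derivative_eq_intros simp: power2_eq_square)
qed
lemma dln0: fixes x :: real
  shows "((\<lambda>y. ln (1 + y\<^sup>2)) has_real_derivative (2 * x) / (1 + x\<^sup>2)) (at x)"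
  using dln[of 1 0 x] by (simp add: add.commute)
lemma pf1:
  fixes u v x N M :: real assumes v: "v > 0"
  assumes N_def: "N = u\<^sup>2+v\<^sup>2-1" and M_def: "M = u\<^sup>2-v\<^sup>2+1"
  shows "(2*u*x + N) / (1 + x\<^sup>2) + (M - 2*u*(x-u)) / ((x - u)\<^sup>2 + v\<^sup>2)
     = (M\<^sup>2 + 4 * u\<^sup>2 * v\<^sup>2) / ((1 + x\<^sup>2) * ((x - u)\<^sup>2 + v\<^sup>2))"
proof -
  have p1: "1+x\<^sup>2 > 0" by (simp add: add_pos_nonneg)
  have p2: "(x-u)\<^sup>2+v\<^sup>2 > 0" using v by (simp add: add_nonneg_pos)
  have "(2*u*x + N) * ((x - u)\<^sup>2 + v\<^sup>2) + (M - 2*u*(x-u)) * (1 + x\<^sup>2) = M\<^sup>2 + 4 * u\<^sup>2 * v\<^sup>2"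
    unfolding N_def M_def by (simp add: power2_eq_square algebra_simps)
  moreover have "(2*u*x + N) / (1 + x\<^sup>2) + (M - 2*u*(x-u)) / ((x - u)\<^sup>2 + v\<^sup>2) =
     ((2*u*x + N) * ((x - u)\<^sup>2 + v\<^sup>2) + (M - 2*u*(x-u)) * (1 + x\<^sup>2)) / ((1 + x\<^sup>2) * ((x - u)\<^sup>2 + v\<^sup>2))"
    using p1 p2 by (intro add_frac_eq) auto
  ultimately show ?thesis by simp
qed
lemma deriv1:
  fixes u v x N M :: real assumes v: "v > 0"
  shows "((\<lambda>y. u * ln (1 + y\<^sup>2) + N * arctan y - u * ln ((y - u)\<^sup>2 + v\<^sup>2) + (M / v) * arctan ((y - u) / v)) has_real_derivative
     (2*u*x + N) / (1 + x\<^sup>2) + (M - 2*u*(x-u)) / ((x - u)\<^sup>2 + v\<^sup>2)) (at x)"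
proof -
  have p1: "1+x\<^sup>2 > 0" by (simp add: add_pos_nonneg)
  have p2: "(x-u)\<^sup>2+v\<^sup>2 > 0" using v by (simp add: add_nonneg_pos)
  have v2: "v\<^sup>2 > 0" using v by simp
  have "((\<lambda>y. u * ln (1 + y\<^sup>2) + N * arctan y - u * ln ((y - u)\<^sup>2 + v\<^sup>2) + (M / v) * arctan ((y - u) / v)) has_real_derivative
     u * ((2 * x) / (1 + x\<^sup>2)) + N * inverse (1 + x\<^sup>2) - u * ((2 * (x - u)) / ((x - u)\<^sup>2 + v\<^sup>2)) + (M / v) * (v / ((x - u)\<^sup>2 + v\<^sup>2))) (at x)"
    by (intro DERIV_add DERIV_diff DERIV_cmult dln0 DERIV_arctan dln[OF v2] darc[OF v])
  moreover have "u * ((2 * x) / (1 + x\<^sup>2)) + N * inverse (1 + x\<^sup>2) - u * ((2 * (x - u)) / ((x - u)\<^sup>2 + v\<^sup>2)) + (M / v) * (v / ((x - u)\<^sup>2 + v\<^sup>2))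
     = (2*u*x + N) / (1 + x\<^sup>2) + (M - 2*u*(x-u)) / ((x - u)\<^sup>2 + v\<^sup>2)"
    using v p1 p2 by (simp add: divide_simps) (simp add: algebra_simps)
  ultimately show ?thesis by simp
qed
lemma h1g: fixes a b D v :: real assumes "v > 0" "D > 0"
  shows "(0 + a * (pi/2) + b / v * (pi/2)) / D - (0 + a * (-pi/2) + b / v * (-pi/2)) / D = pi * (a * v + b) / (v * D)"
  using assms by (simp add: field_simps)
lemma h4g: fixes X Y v :: real assumes "X > 0"
  shows "pi * ((1 + v) * X) / (v * (X * Y)) = pi * (1 + v) / (v * Y)"
  using assms by (metis mult.commute mult.left_commute mult_divide_mult_cancel_left_if less_irrefl)

lemma Delta_eq:
  fixes u v :: real
  shows "(u\<^sup>2-v\<^sup>2+1)\<^sup>2 + 4 * u\<^sup>2 * v\<^sup>2 = (u\<^sup>2+(v-1)\<^sup>2) * (u\<^sup>2+(v+1)\<^sup>2)"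
  by (simp add: power2_eq_square algebra_simps)

lemma Delta_pos:
  fixes u v :: real assumes "v > 0" "\<not> (u = 0 \<and> v = 1)"
  shows "(u\<^sup>2-v\<^sup>2+1)\<^sup>2 + 4 * u\<^sup>2 * v\<^sup>2 > 0"
proof -
  have "u\<^sup>2+(v-1)\<^sup>2 > 0" using assms
    by (auto simp: sum_power2_gt_zero_iff)
  moreover have "u\<^sup>2+(v+1)\<^sup>2 > 0" using assms by (simp add: add_nonneg_pos)
  ultimately show ?thesis unfolding Delta_eq by simp
qed

lemma cont1:
  fixes u v x :: real assumes v: "v > 0"
  shows "isCont (\<lambda>x. 1 / ((1 + x\<^sup>2) * ((x - u)\<^sup>2 + v\<^sup>2))) x"
proof -
  have p1: "1+x\<^sup>2 > 0" by (simp add: add_pos_nonneg)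
  have p2: "(x-u)\<^sup>2+v\<^sup>2 > 0" using v by (simp add: add_nonneg_pos)
  have "(1 + x\<^sup>2) * ((x - u)\<^sup>2 + v\<^sup>2) \<noteq> 0" using p1 p2 v by simp
  then show ?thesis
    by (intro isCont_divide isCont_mult isCont_add isCont_diff isCont_power continuous_ident continuous_const)
qed

lemma cont2:
  fixes u v x :: real assumes v: "v > 0"
  shows "isCont (\<lambda>x. (u - x) / ((1 + x\<^sup>2) * ((x - u)\<^sup>2 + v\<^sup>2))) x"
proof -
  have p1: "1+x\<^sup>2 > 0" by (simp add: add_pos_nonneg)
  have p2: "(x-u)\<^sup>2+v\<^sup>2 > 0" using v by (simp add: add_nonneg_pos)
  have "(1 + x\<^sup>2) * ((x - u)\<^sup>2 + v\<^sup>2) \<noteq> 0" using p1 p2 v by simp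
  then show ?thesis
    by (intro isCont_divide isCont_mult isCont_add isCont_diff isCont_power continuous_ident continuous_const)
qed

lemma nn1:
  fixes u v x :: real assumes v: "v > 0"
  shows "0 \<le> 1 / ((1 + x\<^sup>2) * ((x - u)\<^sup>2 + v\<^sup>2))"
proof -
  have p1: "1+x\<^sup>2 > 0" by (simp add: add_pos_nonneg)
  have p2: "(x-u)\<^sup>2+v\<^sup>2 > 0" using v by (simp add: add_nonneg_pos)
  show ?thesis using p1 p2 by simp
qed

lemma J1_special:
  shows "integrable lborel (\<lambda>x::real. 1 / ((1 + x\<^sup>2) * ((x - 0)\<^sup>2 + 1\<^sup>2)))"
    "integral\<^sup>L lborel (\<lambda>x::real. 1 / ((1 + x\<^sup>2) * ((x - 0)\<^sup>2 + 1\<^sup>2))) = pi / 2"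
proof -
  let ?F = "\<lambda>y::real. (y / (1 + y\<^sup>2) + arctan y) / 2"
  have d: "(?F has_real_derivative 1 / ((1 + x\<^sup>2) * ((x - 0)\<^sup>2 + 1\<^sup>2))) (at x)" for x
  proof -
    have p: "1 + x\<^sup>2 > 0" by (simp add: add_pos_nonneg)
    have "(?F has_real_derivative ((1 * (1 + x\<^sup>2) - x * (2 * x)) / ((1 + x\<^sup>2) * (1 + x\<^sup>2)) + inverse (1 + x\<^sup>2)) / 2) (at x)"
      using p apply (intro derivative_eq_intros refl) 
      apply (auto simp: power2_eq_square) done
    moreover have "((1 * (1 + x\<^sup>2) - x * (2 * x)) / ((1 + x\<^sup>2) * (1 + x\<^sup>2)) + inverse (1 + x\<^sup>2)) / 2 = 1 / ((1 + x\<^sup>2) * ((x - 0)\<^sup>2 + 1\<^sup>2))"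
    proof -
      have e1: "1 * (1 + x\<^sup>2) - x * (2 * x) = 2 - (1 + x\<^sup>2)" by (simp add: power2_eq_square)
      have e2: "(x - 0)\<^sup>2 + 1\<^sup>2 = 1 + x\<^sup>2" by simp
      have g: "\<And>w::real. w > 0 \<Longrightarrow> ((2 - w) / (w * w) + inverse w) / 2 = 1 / (w * w)"
        by (simp add: field_simps)
      show ?thesis unfolding e1 e2 using g[OF p] .
    qed
    ultimately show ?thesis by simp
  qed
  have a1: "((\<lambda>y::real. y / (1 + y\<^sup>2)) \<longlongrightarrow> 0) at_bot"
    unfolding filterlim_at_bot_mirror by real_asymp
  have a2: "((\<lambda>y::real. y / (1 + y\<^sup>2)) \<longlongrightarrow> 0) at_top" by real_asymp
  have a3: "((\<lambda>y::real. arctan y) \<longlongrightarrow> - pi/2) at_bot" by real_asymp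
  have a4: "((\<lambda>y::real. arctan y) \<longlongrightarrow> pi/2) at_top" by real_asymp
  have A: "(?F \<longlongrightarrow> - pi/4) at_bot"
    using tendsto_divide[OF tendsto_add[OF a1 a3] tendsto_const[of 2]] by simp
  have B: "(?F \<longlongrightarrow> pi/4) at_top"
    using tendsto_divide[OF tendsto_add[OF a2 a4] tendsto_const[of 2]] by simp
  have c: "\<And>x. isCont (\<lambda>x::real. 1 / ((1 + x\<^sup>2) * ((x - 0)\<^sup>2 + 1\<^sup>2))) x"
    by (rule cont1) simp
  have n: "\<And>x. 0 \<le> 1 / ((1 + x\<^sup>2) * ((x - 0)\<^sup>2 + (1::real)\<^sup>2))"
    by (rule nn1) simp
  show "integrable lborel (\<lambda>x::real. 1 / ((1 + x\<^sup>2) * ((x - 0)\<^sup>2 + 1\<^sup>2)))"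
    "integral\<^sup>L lborel (\<lambda>x::real. 1 / ((1 + x\<^sup>2) * ((x - 0)\<^sup>2 + 1\<^sup>2))) = pi / 2"
    using FTC_UNIV_nonneg[OF d c n A B] by simp_all
qed
lemma J1_gen:
  fixes u v :: real assumes v: "v > 0" and nuv: "\<not> (u = 0 \<and> v = 1)"
  shows "integrable lborel (\<lambda>x. 1 / ((1 + x\<^sup>2) * ((x - u)\<^sup>2 + v\<^sup>2)))"
    "integral\<^sup>L lborel (\<lambda>x. 1 / ((1 + x\<^sup>2) * ((x - u)\<^sup>2 + v\<^sup>2))) = pi * (1 + v) / (v * (u\<^sup>2 + (1 + v)\<^sup>2))"
proof -
  define N where "N = u\<^sup>2+v\<^sup>2-1"
  define M where "M = u\<^sup>2-v\<^sup>2+1"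
  define D where "D = M\<^sup>2 + 4 * u\<^sup>2 * v\<^sup>2"
  have Dpos: "D > 0" unfolding D_def M_def using Delta_pos[OF v nuv] .
  let ?F = "\<lambda>y. (u * ln (1 + y\<^sup>2) + N * arctan y - u * ln ((y - u)\<^sup>2 + v\<^sup>2) + (M / v) * arctan ((y - u) / v)) / D"
  have d: "(?F has_real_derivative 1 / ((1 + x\<^sup>2) * ((x - u)\<^sup>2 + v\<^sup>2))) (at x)" for x
  proof -
    have "(?F has_real_derivative ((M\<^sup>2 + 4 * u\<^sup>2 * v\<^sup>2) / ((1 + x\<^sup>2) * ((x - u)\<^sup>2 + v\<^sup>2))) / D) (at x)"
      using DERIV_cdivide[OF deriv1[OF v, of u N M x], of D] pf1[OF v N_def M_def, of x] by simp
    then show ?thesis using Dpos unfolding D_def by simp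
  qed
  have l1: "((\<lambda>y. u * ln (1 + y\<^sup>2) - u * ln ((y - u)\<^sup>2 + v\<^sup>2)) \<longlongrightarrow> 0) at_top"
    using v by real_asymp
  have l2: "((\<lambda>y. u * ln (1 + y\<^sup>2) - u * ln ((y - u)\<^sup>2 + v\<^sup>2)) \<longlongrightarrow> 0) at_bot"
    unfolding filterlim_at_bot_mirror using v by real_asymp
  have l3: "((\<lambda>y. arctan ((y - u) / v)) \<longlongrightarrow> pi/2) at_top" using v by real_asymp
  have l4: "((\<lambda>y. arctan ((y - u) / v)) \<longlongrightarrow> -pi/2) at_bot"
    unfolding filterlim_at_bot_mirror using v by real_asymp
  have l5: "((\<lambda>y. arctan y) \<longlongrightarrow> pi/2) at_top" by real_asymp
  have l6: "((\<lambda>y. arctan y) \<longlongrightarrow> -pi/2) at_bot" unfolding filterlim_at_bot_mirror by real_asymp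
  have eqG: "?F = (\<lambda>y. ((u * ln (1 + y\<^sup>2) - u * ln ((y - u)\<^sup>2 + v\<^sup>2)) + N * arctan y + (M / v) * arctan ((y - u) / v)) / D)"
    by (rule ext) (simp add: algebra_simps)
  have B: "(?F \<longlongrightarrow> (0 + N * (pi/2) + M / v * (pi/2)) / D) at_top"
    unfolding eqG using Dpos
    by (intro tendsto_divide[OF tendsto_add[OF tendsto_add[OF l1 tendsto_mult[OF tendsto_const l5]] tendsto_mult[OF tendsto_const l3]] tendsto_const]) auto
  have A: "(?F \<longlongrightarrow> (0 + N * (-pi/2) + M / v * (-pi/2)) / D) at_bot"
    unfolding eqG using Dpos
    by (intro tendsto_divide[OF tendsto_add[OF tendsto_add[OF l2 tendsto_mult[OF tendsto_const l6]] tendsto_mult[OF tendsto_const l4]] tendsto_const]) auto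
  have e: "(0 + N * (pi/2) + M / v * (pi/2)) / D - (0 + N * (-pi/2) + M / v * (-pi/2)) / D
     = pi * (1 + v) / (v * (u\<^sup>2 + (1 + v)\<^sup>2))"
  proof -
    have q1: "u\<^sup>2+(v-1)\<^sup>2 > 0" using nuv by (auto simp: sum_power2_gt_zero_iff)
    have h1: "(0 + N * (pi/2) + M / v * (pi/2)) / D - (0 + N * (-pi/2) + M / v * (-pi/2)) / D
       = pi * (N * v + M) / (v * D)" using h1g[OF v Dpos] .
    have h2: "N * v + M = (1 + v) * (u\<^sup>2+(v-1)\<^sup>2)" unfolding N_def M_def by (simp add: power2_eq_square algebra_simps)
    have h3: "D = (u\<^sup>2+(v-1)\<^sup>2) * (u\<^sup>2+(1+v)\<^sup>2)" unfolding D_def M_def Delta_eq by (simp add: add.commute)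
    have h4: "pi * ((1 + v) * (u\<^sup>2+(v-1)\<^sup>2)) / (v * ((u\<^sup>2+(v-1)\<^sup>2) * (u\<^sup>2+(1+v)\<^sup>2)))
        = pi * (1 + v) / (v * (u\<^sup>2 + (1 + v)\<^sup>2))" using h4g[OF q1] .
    show ?thesis by (subst h1, subst h2, subst h3, rule h4)
  qed
  have c: "\<And>x. isCont (\<lambda>x. 1 / ((1 + x\<^sup>2) * ((x - u)\<^sup>2 + v\<^sup>2))) x" using cont1[OF v] .
  have n: "\<And>x. 0 \<le> 1 / ((1 + x\<^sup>2) * ((x - u)\<^sup>2 + v\<^sup>2))" using nn1[OF v] .
  note r = FTC_UNIV_nonneg[OF d c n A B]
  show "integrable lborel (\<lambda>x. 1 / ((1 + x\<^sup>2) * ((x - u)\<^sup>2 + v\<^sup>2)))" using r(1) .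
  show "integral\<^sup>L lborel (\<lambda>x. 1 / ((1 + x\<^sup>2) * ((x - u)\<^sup>2 + v\<^sup>2))) = pi * (1 + v) / (v * (u\<^sup>2 + (1 + v)\<^sup>2))"
    using r(2) e by simp
qed
lemma f2_bound:
  fixes u v x :: real assumes v: "v > 0"
  shows "\<bar>(u - x) / ((1 + x\<^sup>2) * ((x - u)\<^sup>2 + v\<^sup>2))\<bar> \<le> 1 / (2 * v) * inverse (1 + x\<^sup>2)"
proof -
  have p1: "1+x\<^sup>2 > 0" by (simp add: add_pos_nonneg)
  have p2: "(x-u)\<^sup>2+v\<^sup>2 > 0" using v by (simp add: add_nonneg_pos)
  have amgm: "2 * v * \<bar>u - x\<bar> \<le> (x - u)\<^sup>2 + v\<^sup>2"
  proof -
    have "0 \<le> (\<bar>u - x\<bar> - v)\<^sup>2" by simp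
    also have "(\<bar>u - x\<bar> - v)\<^sup>2 = \<bar>u - x\<bar>\<^sup>2 + v\<^sup>2 - 2 * \<bar>u - x\<bar> * v" by (rule power2_diff)
    also have "\<bar>u - x\<bar>\<^sup>2 = (x - u)\<^sup>2" by (simp add: power2_commute)
    finally show ?thesis by (simp add: algebra_simps)
  qed
  have m1: "1 / (2 * v) * (2 * v * \<bar>u - x\<bar>) \<le> 1 / (2 * v) * ((x - u)\<^sup>2 + v\<^sup>2)"
    by (rule mult_left_mono[OF amgm]) (use v in simp)
  have m2: "1 / (2 * v) * (2 * v * \<bar>u - x\<bar>) = \<bar>u - x\<bar>" using v by simp
  have "\<bar>u - x\<bar> / ((x - u)\<^sup>2 + v\<^sup>2) \<le> 1 / (2 * v)"
    unfolding pos_divide_le_eq[OF p2] using m1 m2 by simp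
  then have r: "\<bar>u - x\<bar> / ((x - u)\<^sup>2 + v\<^sup>2) * inverse (1 + x\<^sup>2) \<le> 1 / (2 * v) * inverse (1 + x\<^sup>2)"
    by (rule mult_right_mono) (use p1 in simp)
  have g: "\<And>a b c :: real. a / (b * c) = a / c * inverse b" by (simp add: divide_inverse)
  have "\<bar>(u - x) / ((1 + x\<^sup>2) * ((x - u)\<^sup>2 + v\<^sup>2))\<bar> = \<bar>u - x\<bar> / ((1 + x\<^sup>2) * ((x - u)\<^sup>2 + v\<^sup>2))"
    using p1 p2 by (simp add: abs_divide)
  also have "\<dots> = \<bar>u - x\<bar> / ((x - u)\<^sup>2 + v\<^sup>2) * inverse (1 + x\<^sup>2)" by (rule g)
  finally show ?thesis using r by simp
qed

lemma integrable_f2: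
  fixes u v :: real assumes v: "v > 0"
  shows "integrable lborel (\<lambda>x. (u - x) / ((1 + x\<^sup>2) * ((x - u)\<^sup>2 + v\<^sup>2)))"
proof (rule Bochner_Integration.integrable_bound)
  have "integrable lborel (\<lambda>x::real. inverse (1 + x\<^sup>2))"
    using integrable_inverse_1_plus_square by (simp add: set_integrable_def)
  then show "integrable lborel (\<lambda>x::real. 1 / (2 * v) * inverse (1 + x\<^sup>2))" by simp
  show "(\<lambda>x. (u - x) / ((1 + x\<^sup>2) * ((x - u)\<^sup>2 + v\<^sup>2))) \<in> borel_measurable lborel" by measurable
  show "AE x in lborel. norm ((u - x) / ((1 + x\<^sup>2) * ((x - u)\<^sup>2 + v\<^sup>2))) \<le> norm (1 / (2 * v) * inverse (1 + x\<^sup>2))"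
  proof (rule AE_I2)
    fix x :: real
    have "0 \<le> 1 / (2 * v) * inverse (1 + x\<^sup>2)" using v by (simp add: add_pos_nonneg less_imp_le)
    then show "norm ((u - x) / ((1 + x\<^sup>2) * ((x - u)\<^sup>2 + v\<^sup>2))) \<le> norm (1 / (2 * v) * inverse (1 + x\<^sup>2))"
      using f2_bound[OF v, of u x] by (simp only: real_norm_def abs_of_nonneg)
  qed
qed
lemma pf2:
  fixes u v x N M K :: real assumes v: "v > 0"
  assumes N_def: "N = u\<^sup>2+v\<^sup>2-1" and M_def: "M = u\<^sup>2-v\<^sup>2+1" and K_def: "K = u * (N + 2)"
  shows "(M * x + K) / (1 + x\<^sup>2) + (- M * (x - u) - 2 * u * v\<^sup>2) / ((x - u)\<^sup>2 + v\<^sup>2)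
     = (M\<^sup>2 + 4 * u\<^sup>2 * v\<^sup>2) * ((u - x) / ((1 + x\<^sup>2) * ((x - u)\<^sup>2 + v\<^sup>2)))"
proof -
  have p1: "1+x\<^sup>2 > 0" by (simp add: add_pos_nonneg)
  have p2: "(x-u)\<^sup>2+v\<^sup>2 > 0" using v by (simp add: add_nonneg_pos)
  have "(M * x + K) * ((x - u)\<^sup>2 + v\<^sup>2) + (- M * (x - u) - 2 * u * v\<^sup>2) * (1 + x\<^sup>2) = (M\<^sup>2 + 4 * u\<^sup>2 * v\<^sup>2) * (u - x)"
    unfolding K_def N_def M_def by (simp add: power2_eq_square algebra_simps)
  moreover have "(M * x + K) / (1 + x\<^sup>2) + (- M * (x - u) - 2 * u * v\<^sup>2) / ((x - u)\<^sup>2 + v\<^sup>2) =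
     ((M * x + K) * ((x - u)\<^sup>2 + v\<^sup>2) + (- M * (x - u) - 2 * u * v\<^sup>2) * (1 + x\<^sup>2)) / ((1 + x\<^sup>2) * ((x - u)\<^sup>2 + v\<^sup>2))"
    using p1 p2 by (intro add_frac_eq) auto
  moreover have "\<And>a b c :: real. a * (b / c) = (a * b) / c" by simp
  ultimately show ?thesis by simp
qed

lemma deriv2:
  fixes u v x M K :: real assumes v: "v > 0"
  shows "((\<lambda>y. (M / 2) * ln (1 + y\<^sup>2) + K * arctan y - (M / 2) * ln ((y - u)\<^sup>2 + v\<^sup>2) - (2 * u * v) * arctan ((y - u) / v)) has_real_derivative
     (M * x + K) / (1 + x\<^sup>2) + (- M * (x - u) - 2 * u * v\<^sup>2) / ((x - u)\<^sup>2 + v\<^sup>2)) (at x)"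
proof -
  have p1: "1+x\<^sup>2 > 0" by (simp add: add_pos_nonneg)
  have p2: "(x-u)\<^sup>2+v\<^sup>2 > 0" using v by (simp add: add_nonneg_pos)
  have v2: "v\<^sup>2 > 0" using v by simp
  have "((\<lambda>y. (M / 2) * ln (1 + y\<^sup>2) + K * arctan y - (M / 2) * ln ((y - u)\<^sup>2 + v\<^sup>2) - (2 * u * v) * arctan ((y - u) / v)) has_real_derivative
     (M / 2) * ((2 * x) / (1 + x\<^sup>2)) + K * inverse (1 + x\<^sup>2) - (M / 2) * ((2 * (x - u)) / ((x - u)\<^sup>2 + v\<^sup>2)) - (2 * u * v) * (v / ((x - u)\<^sup>2 + v\<^sup>2))) (at x)"
    by (intro DERIV_add DERIV_diff DERIV_cmult dln0 DERIV_arctan dln[OF v2] darc[OF v])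
  moreover have "(M / 2) * ((2 * x) / (1 + x\<^sup>2)) + K * inverse (1 + x\<^sup>2) - (M / 2) * ((2 * (x - u)) / ((x - u)\<^sup>2 + v\<^sup>2)) - (2 * u * v) * (v / ((x - u)\<^sup>2 + v\<^sup>2))
     = (M * x + K) / (1 + x\<^sup>2) + (- M * (x - u) - 2 * u * v\<^sup>2) / ((x - u)\<^sup>2 + v\<^sup>2)"
    using v p1 p2 by (simp add: divide_simps) (simp add: algebra_simps power2_eq_square)
  ultimately show ?thesis by simp
qed

lemma J2_special:
  shows "integral\<^sup>L lborel (\<lambda>x::real. (0 - x) / ((1 + x\<^sup>2) * ((x - 0)\<^sup>2 + 1\<^sup>2))) = 0"
proof -
  let ?F = "\<lambda>y::real. inverse (1 + y\<^sup>2) / 2"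
  have d: "(?F has_real_derivative (0 - x) / ((1 + x\<^sup>2) * ((x - 0)\<^sup>2 + 1\<^sup>2))) (at x)" for x
  proof -
    have p: "1 + x\<^sup>2 > 0" by (simp add: add_pos_nonneg)
    have "(?F has_real_derivative (- (inverse (1 + x\<^sup>2) * (2 * x) * inverse (1 + x\<^sup>2))) / 2) (at x)"
      using p by (auto intro!: derivative_eq_intros simp: power2_eq_square)
    moreover have "(- (inverse (1 + x\<^sup>2) * (2 * x) * inverse (1 + x\<^sup>2))) / 2 = (0 - x) / ((1 + x\<^sup>2) * ((x - 0)\<^sup>2 + 1\<^sup>2))"
    proof -
      have e2: "(x - 0)\<^sup>2 + 1\<^sup>2 = 1 + x\<^sup>2" by simp
      have g: "\<And>w::real. w > 0 \<Longrightarrow> (- (inverse w * (2 * x) * inverse w)) / 2 = (0 - x) / (w * w)"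
        by (simp add: field_simps)
      show ?thesis unfolding e2 using g[OF p] .
    qed
    ultimately show ?thesis by simp
  qed
  have A: "(?F \<longlongrightarrow> 0) at_bot" unfolding filterlim_at_bot_mirror by real_asymp
  have B: "(?F \<longlongrightarrow> 0) at_top" by real_asymp
  have c: "\<And>x. isCont (\<lambda>x::real. (0 - x) / ((1 + x\<^sup>2) * ((x - 0)\<^sup>2 + 1\<^sup>2))) x"
    by (rule cont2) simp
  have i: "integrable lborel (\<lambda>x::real. (0 - x) / ((1 + x\<^sup>2) * ((x - 0)\<^sup>2 + 1\<^sup>2)))"
    by (rule integrable_f2) simp
  show ?thesis using FTC_UNIV_integrable[OF d c i A B] by simp
qed

lemma h5g: fixes a b D :: real assumes "D > 0"
  shows "(0 + a * (pi/2) - b * (pi/2)) / D - (0 + a * (-pi/2) - b * (-pi/2)) / D = pi * (a - b) / D"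
  using assms by (simp add: field_simps)

lemma J2_gen:
  fixes u v :: real assumes v: "v > 0" and nuv: "\<not> (u = 0 \<and> v = 1)"
  shows "integral\<^sup>L lborel (\<lambda>x. (u - x) / ((1 + x\<^sup>2) * ((x - u)\<^sup>2 + v\<^sup>2))) = pi * u / (u\<^sup>2 + (1 + v)\<^sup>2)"
proof -
  define N where "N = u\<^sup>2+v\<^sup>2-1"
  define M where "M = u\<^sup>2-v\<^sup>2+1"
  define K where "K = u * (N + 2)"
  define D where "D = M\<^sup>2 + 4 * u\<^sup>2 * v\<^sup>2"
  have Dpos: "D > 0" unfolding D_def M_def using Delta_pos[OF v nuv] .
  let ?F = "\<lambda>y. ((M / 2) * ln (1 + y\<^sup>2) + K * arctan y - (M / 2) * ln ((y - u)\<^sup>2 + v\<^sup>2) - (2 * u * v) * arctan ((y - u) / v)) / D"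
  have d: "(?F has_real_derivative (u - x) / ((1 + x\<^sup>2) * ((x - u)\<^sup>2 + v\<^sup>2))) (at x)" for x
  proof -
    have "(?F has_real_derivative ((M\<^sup>2 + 4 * u\<^sup>2 * v\<^sup>2) * ((u - x) / ((1 + x\<^sup>2) * ((x - u)\<^sup>2 + v\<^sup>2)))) / D) (at x)"
      using DERIV_cdivide[OF deriv2[OF v, of M K u x], of D] pf2[OF v N_def M_def K_def, of x] by simp
    then show ?thesis using Dpos unfolding D_def by simp
  qed
  have l1: "((\<lambda>y. (M / 2) * ln (1 + y\<^sup>2) - (M / 2) * ln ((y - u)\<^sup>2 + v\<^sup>2)) \<longlongrightarrow> 0) at_top"
    using v by real_asymp
  have l2: "((\<lambda>y. (M / 2) * ln (1 + y\<^sup>2) - (M / 2) * ln ((y - u)\<^sup>2 + v\<^sup>2)) \<longlongrightarrow> 0) at_bot"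
    unfolding filterlim_at_bot_mirror using v by real_asymp
  have l3: "((\<lambda>y. arctan ((y - u) / v)) \<longlongrightarrow> pi/2) at_top" using v by real_asymp
  have l4: "((\<lambda>y. arctan ((y - u) / v)) \<longlongrightarrow> -pi/2) at_bot"
    unfolding filterlim_at_bot_mirror using v by real_asymp
  have l5: "((\<lambda>y. arctan y) \<longlongrightarrow> pi/2) at_top" by real_asymp
  have l6: "((\<lambda>y. arctan y) \<longlongrightarrow> -pi/2) at_bot" unfolding filterlim_at_bot_mirror by real_asymp
  have eqG: "?F = (\<lambda>y. (((M / 2) * ln (1 + y\<^sup>2) - (M / 2) * ln ((y - u)\<^sup>2 + v\<^sup>2)) + K * arctan y - (2 * u * v) * arctan ((y - u) / v)) / D)"
    by (rule ext) (simp add: algebra_simps)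
  have B: "(?F \<longlongrightarrow> (0 + K * (pi/2) - (2 * u * v) * (pi/2)) / D) at_top"
    unfolding eqG using Dpos
    by (intro tendsto_divide[OF tendsto_diff[OF tendsto_add[OF l1 tendsto_mult[OF tendsto_const l5]] tendsto_mult[OF tendsto_const l3]] tendsto_const]) auto
  have A: "(?F \<longlongrightarrow> (0 + K * (-pi/2) - (2 * u * v) * (-pi/2)) / D) at_bot"
    unfolding eqG using Dpos
    by (intro tendsto_divide[OF tendsto_diff[OF tendsto_add[OF l2 tendsto_mult[OF tendsto_const l6]] tendsto_mult[OF tendsto_const l4]] tendsto_const]) auto
  have e: "(0 + K * (pi/2) - (2 * u * v) * (pi/2)) / D - (0 + K * (-pi/2) - (2 * u * v) * (-pi/2)) / D
     = pi * u / (u\<^sup>2 + (1 + v)\<^sup>2)"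
  proof -
    have q1: "u\<^sup>2+(v-1)\<^sup>2 > 0" using nuv by (auto simp: sum_power2_gt_zero_iff)
    have h1: "(0 + K * (pi/2) - (2 * u * v) * (pi/2)) / D - (0 + K * (-pi/2) - (2 * u * v) * (-pi/2)) / D
       = pi * (K - 2 * u * v) / D" using h5g[OF Dpos] .
    have h2: "K - 2 * u * v = u * (u\<^sup>2+(v-1)\<^sup>2)" unfolding K_def N_def by (simp add: power2_eq_square algebra_simps)
    have h3: "D = (u\<^sup>2+(v-1)\<^sup>2) * (u\<^sup>2+(1+v)\<^sup>2)" unfolding D_def M_def Delta_eq by (simp add: add.commute)
    have h4: "pi * (u * (u\<^sup>2+(v-1)\<^sup>2)) / ((u\<^sup>2+(v-1)\<^sup>2) * (u\<^sup>2+(1+v)\<^sup>2))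
        = pi * u / (u\<^sup>2 + (1 + v)\<^sup>2)" using q1
      by (metis (no_types, lifting) mult.commute mult.left_commute mult_divide_mult_cancel_left_if less_irrefl)
    show ?thesis by (subst h1, subst h2, subst h3, rule h4)
  qed
  have c: "\<And>x. isCont (\<lambda>x. (u - x) / ((1 + x\<^sup>2) * ((x - u)\<^sup>2 + v\<^sup>2))) x" using cont2[OF v] .
  have i: "integrable lborel (\<lambda>x. (u - x) / ((1 + x\<^sup>2) * ((x - u)\<^sup>2 + v\<^sup>2)))" using integrable_f2[OF v] .
  show ?thesis using FTC_UNIV_integrable[OF d c i A B] e by simp
qed
definition gfun :: "real \<Rightarrow> real \<Rightarrow> real" where
  "gfun t w = t * (1 + w) / w - (1 + w)\<^sup>2"

definition Vfun :: "real \<Rightarrow> real \<Rightarrow> real" where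
  "Vfun t s = (THE w. w > 0 \<and> gfun t w = s)"

lemma gfun_alt: "w > 0 \<Longrightarrow> gfun t w = t + t / w - (1 + w)\<^sup>2"
  unfolding gfun_def by (simp add: field_simps)

lemma gfun_strict:
  assumes t: "t > 0" and a: "0 < a" and ab: "a < b"
  shows "gfun t b < gfun t a"
proof -
  have b: "b > 0" using a ab by simp
  have "t / b < t / a" using t a ab by (simp add: divide_strict_left_mono)
  moreover have "(1 + a)\<^sup>2 < (1 + b)\<^sup>2" using a ab by (simp add: power_strict_mono)
  ultimately show ?thesis using gfun_alt[OF a, of t] gfun_alt[OF b, of t] by simp
qed

lemma gfun_deriv:
  assumes w: "w > 0"
  shows "(gfun t has_real_derivative (- t / w\<^sup>2 - 2 * (1 + w))) (at w)"
proof -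
  have "((\<lambda>w. t * (1 + w) / w - (1 + w)\<^sup>2) has_real_derivative
          ((t * (0 + 1)) * w - t * (1 + w) * 1) / (w * w) - 2 * (1 + w) * (0 + 1)) (at w)"
    using w by (intro derivative_eq_intros refl) (auto simp: power2_eq_square)
  moreover have "((t * (0 + 1)) * w - t * (1 + w) * 1) / (w * w) - 2 * (1 + w) * (0 + 1) = - t / w\<^sup>2 - 2 * (1 + w)"
    using w by (simp add: field_simps power2_eq_square)
  ultimately show ?thesis unfolding gfun_def[abs_def] by simp
qed

lemma gfun_cont: "w > 0 \<Longrightarrow> isCont (gfun t) w"
  using gfun_deriv DERIV_isCont by blast

lemma gfun_exists:
  assumes t: "t > 0"
  shows "\<exists>w>0. gfun t w = s"
proof -
  define a where "a = min 1 (t / (\<bar>s\<bar> + 4))"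
  define b where "b = 1 + \<bar>s\<bar> + 2 * t"
  have a0: "a > 0" unfolding a_def using t by simp
  have a1: "a \<le> 1" unfolding a_def by simp
  have b1: "b \<ge> 1" unfolding b_def using t by simp
  have ga: "s \<le> gfun t a"
  proof -
    have "t / (t / (\<bar>s\<bar> + 4)) = \<bar>s\<bar> + 4" using t by simp
    moreover have "t / (t / (\<bar>s\<bar> + 4)) \<le> t / a"
      using a0 t by (intro divide_left_mono) (auto simp: a_def)
    ultimately have "\<bar>s\<bar> + 4 \<le> t / a" by simp
    moreover have "(1 + a)\<^sup>2 \<le> 4"
    proof -
      have "(1 + a)\<^sup>2 \<le> 2\<^sup>2" using a0 a1 by (intro power_mono) auto
      then show ?thesis by simp
    qed
    ultimately show ?thesis using gfun_alt[OF a0, of t] t by simp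
  qed
  have gb: "gfun t b \<le> s"
  proof -
    have b0: "b > 0" using b1 by simp
    have "t / b \<le> t" using t b1 by (simp add: divide_le_eq)
    moreover have "b \<le> b\<^sup>2" using b1 by (simp add: power2_eq_square)
    moreover have "b\<^sup>2 \<le> (1 + b)\<^sup>2" using b0 by (intro power_mono) auto
    moreover have "gfun t b = t + t / b - (1 + b)\<^sup>2" using gfun_alt[OF b0, of t] .
    ultimately show ?thesis using b_def abs_ge_minus_self[of s] by linarith
  qed
  have "\<exists>x\<ge>a. x \<le> b \<and> gfun t x = s"
    by (rule IVT2[of "gfun t" b s a, OF gb ga]) (use a1 b1 a0 gfun_cont in auto)
  then obtain x where "x \<ge> a" "gfun t x = s" by blast
  then show ?thesis using a0 by (intro exI[of _ x]) auto
qed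

lemma gfun_unique:
  assumes t: "t > 0" "w1 > 0" "w2 > 0" "gfun t w1 = gfun t w2"
  shows "w1 = w2"
  using gfun_strict[OF t(1) t(2)] gfun_strict[OF t(1) t(3)] t(4)
  by (metis less_irrefl linorder_neqE_linordered_idom)

lemma Vfun:
  assumes t: "t > 0"
  shows "Vfun t s > 0" "gfun t (Vfun t s) = s"
proof -
  obtain w where w: "w > 0" "gfun t w = s" using gfun_exists[OF t] by blast
  have "Vfun t s = w" unfolding Vfun_def
    by (rule the_equality) (use w gfun_unique[OF t] in auto)
  then show "Vfun t s > 0" "gfun t (Vfun t s) = s" using w by auto
qed

lemma Vfun_g:
  assumes t: "t > 0" and w: "w > 0"
  shows "Vfun t (gfun t w) = w"
  using Vfun[OF t, of "gfun t w"] gfun_unique[OF t _ w] by blast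

lemma neg_aux: "(a::real) > 0 \<Longrightarrow> (b::real) > 0 \<Longrightarrow> - a - 2 * (1 + b) < 0"
  by (simp add: algebra_simps)

lemma Vfun_deriv:
  assumes t: "t > 0"
  shows "(Vfun t has_real_derivative inverse (- t / (Vfun t s)\<^sup>2 - 2 * (1 + Vfun t s))) (at s)"
proof -
  let ?w = "Vfun t s"
  have w0: "?w > 0" using Vfun(1)[OF t] .
  have cont: "isCont (Vfun t) s"
  proof -
    have "isCont (Vfun t) (gfun t ?w)"
      by (rule isCont_inverse_function2[where a="?w / 2" and b="2 * ?w"])
         (use w0 in \<open>auto intro!: Vfun_g[OF t] gfun_cont\<close>)
    then show ?thesis using Vfun(2)[OF t] by simp
  qed
  have ne: "- t / ?w\<^sup>2 - 2 * (1 + ?w) \<noteq> 0"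
  proof -
    have h: "t / ?w\<^sup>2 > 0" using t w0 by simp
    have "- t / ?w\<^sup>2 - 2 * (1 + ?w) = - (t / ?w\<^sup>2) - 2 * (1 + ?w)" by simp
    also have "\<dots> < 0" using neg_aux[OF h w0] .
    finally have "- t / ?w\<^sup>2 - 2 * (1 + ?w) < 0" .
    then show ?thesis by simp
  qed
  show ?thesis
    by (rule DERIV_inverse_function[where a="s - 1" and b="s + 1"])
       (use gfun_deriv[OF w0, of t] ne cont Vfun(2)[OF t] in auto)
qed
lemma cauchy_int:
  assumes f: "f \<in> borel_measurable lborel"
  shows "integral\<^sup>L cauchy_measure f = integral\<^sup>L lborel (\<lambda>x. 1 / (pi * (1 + x\<^sup>2)) * f x)"
proof -
  have g: "(\<lambda>x::real. 1 / (pi * (1 + x\<^sup>2))) \<in> borel_measurable lborel" by measurable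
  have n: "AE x in lborel. 0 \<le> 1 / (pi * (1 + x\<^sup>2))"
    by (rule AE_I2) (simp add: add_pos_nonneg less_imp_le)
  show ?thesis unfolding cauchy_measure_def
    using integral_density[OF f g n] by simp
qed

lemma J1_all:
  fixes u v :: real assumes v: "v > 0"
  shows "integral\<^sup>L lborel (\<lambda>x. 1 / ((1 + x\<^sup>2) * ((x - u)\<^sup>2 + v\<^sup>2))) = pi * (1 + v) / (v * (u\<^sup>2 + (1 + v)\<^sup>2))"
proof (cases "u = 0 \<and> v = 1")
  case True
  then show ?thesis using J1_special(2) by simp
next
  case False
  then show ?thesis using J1_gen(2)[OF v] by simp
qed

lemma J2_all:
  fixes u v :: real assumes v: "v > 0"
  shows "integral\<^sup>L lborel (\<lambda>x. (u - x) / ((1 + x\<^sup>2) * ((x - u)\<^sup>2 + v\<^sup>2))) = pi * u / (u\<^sup>2 + (1 + v)\<^sup>2)"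
proof (cases "u = 0 \<and> v = 1")
  case True
  then show ?thesis using J2_special by simp
next
  case False
  then show ?thesis using J2_gen[OF v] by simp
qed

lemma I1:
  fixes u v :: real assumes v: "v > 0"
  shows "(\<integral>x. 1 / ((u - x)\<^sup>2 + v\<^sup>2) \<partial>cauchy_measure) = (1 + v) / (v * (u\<^sup>2 + (1 + v)\<^sup>2))"
proof -
  have "(\<integral>x. 1 / ((u - x)\<^sup>2 + v\<^sup>2) \<partial>cauchy_measure) = (\<integral>x. 1 / (pi * (1 + x\<^sup>2)) * (1 / ((u - x)\<^sup>2 + v\<^sup>2)) \<partial>lborel)"
    by (rule cauchy_int) measurable
  also have "\<dots> = (\<integral>x. 1 / pi * (1 / ((1 + x\<^sup>2) * ((x - u)\<^sup>2 + v\<^sup>2))) \<partial>lborel)"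
  proof (rule Bochner_Integration.integral_cong[OF refl])
    fix x :: real
    have "(u - x)\<^sup>2 = (x - u)\<^sup>2" by (rule power2_commute)
    then show "1 / (pi * (1 + x\<^sup>2)) * (1 / ((u - x)\<^sup>2 + v\<^sup>2)) = 1 / pi * (1 / ((1 + x\<^sup>2) * ((x - u)\<^sup>2 + v\<^sup>2)))"
      by simp
  qed
  also have "\<dots> = 1 / pi * (pi * (1 + v) / (v * (u\<^sup>2 + (1 + v)\<^sup>2)))"
    by (subst integral_mult_right_zero) (simp add: J1_all[OF v])
  also have "\<dots> = (1 + v) / (v * (u\<^sup>2 + (1 + v)\<^sup>2))" by simp
  finally show ?thesis .
qed

lemma I2:
  fixes u v :: real assumes v: "v > 0"
  shows "(\<integral>x. (u - x) / ((u - x)\<^sup>2 + v\<^sup>2) \<partial>cauchy_measure) = u / (u\<^sup>2 + (1 + v)\<^sup>2)"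
proof -
  have "(\<integral>x. (u - x) / ((u - x)\<^sup>2 + v\<^sup>2) \<partial>cauchy_measure) = (\<integral>x. 1 / (pi * (1 + x\<^sup>2)) * ((u - x) / ((u - x)\<^sup>2 + v\<^sup>2)) \<partial>lborel)"
    by (rule cauchy_int) measurable
  also have "\<dots> = (\<integral>x. 1 / pi * ((u - x) / ((1 + x\<^sup>2) * ((x - u)\<^sup>2 + v\<^sup>2))) \<partial>lborel)"
  proof (rule Bochner_Integration.integral_cong[OF refl])
    fix x :: real
    have "(u - x)\<^sup>2 = (x - u)\<^sup>2" by (rule power2_commute)
    then show "1 / (pi * (1 + x\<^sup>2)) * ((u - x) / ((u - x)\<^sup>2 + v\<^sup>2)) = 1 / pi * ((u - x) / ((1 + x\<^sup>2) * ((x - u)\<^sup>2 + v\<^sup>2)))"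
      by simp
  qed
  also have "\<dots> = 1 / pi * (pi * u / (u\<^sup>2 + (1 + v)\<^sup>2))"
    by (subst integral_mult_right_zero) (simp add: J2_all[OF v])
  also have "\<dots> = u / (u\<^sup>2 + (1 + v)\<^sup>2)" by simp
  finally show ?thesis .
qed

lemma ineq_aux:
  fixes t v P :: real assumes "t > 0" "v > 0" "P > 0"
  shows "((1 + v) / (v * P) \<le> 1 / t) = (t * (1 + v) / v \<le> P)"
  using assms by (simp add: field_simps)

lemma gfun_le_iff:
  assumes t: "t > 0" and v: "v > 0"
  shows "(gfun t v \<le> s) = (Vfun t s \<le> v)"
proof -
  have w0: "Vfun t s > 0" and gw: "gfun t (Vfun t s) = s" using Vfun[OF t] by auto
  show ?thesis
  proof
    assume "gfun t v \<le> s"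
    show "Vfun t s \<le> v"
    proof (rule ccontr)
      assume "\<not> Vfun t s \<le> v"
      then have "gfun t (Vfun t s) < gfun t v" using gfun_strict[OF t v] by simp
      then show False using gw \<open>gfun t v \<le> s\<close> by simp
    qed
  next
    assume h: "Vfun t s \<le> v"
    show "gfun t v \<le> s"
    proof (cases "Vfun t s = v")
      case True then show ?thesis using gw by simp
    next
      case False
      then have "gfun t v < gfun t (Vfun t s)" using gfun_strict[OF t w0] h by simp
      then show ?thesis using gw by simp
    qed
  qed
qed

lemma vt_eq:
  assumes t: "t > 0"
  shows "v_t cauchy_measure t u = Vfun t (u\<^sup>2)"
proof -
  have "{v. v > 0 \<and> (\<integral>x. 1 / ((u - x)\<^sup>2 + v\<^sup>2) \<partial>cauchy_measure) \<le> 1 / t} = {Vfun t (u\<^sup>2)..}"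
  proof (intro set_eqI iffI)
    fix v assume "v \<in> {v. v > 0 \<and> (\<integral>x. 1 / ((u - x)\<^sup>2 + v\<^sup>2) \<partial>cauchy_measure) \<le> 1 / t}"
    then have v: "v > 0" and le: "(1 + v) / (v * (u\<^sup>2 + (1 + v)\<^sup>2)) \<le> 1 / t" using I1 by auto
    have P: "u\<^sup>2 + (1 + v)\<^sup>2 > 0" using v by (simp add: add_nonneg_pos)
    have "t * (1 + v) / v \<le> u\<^sup>2 + (1 + v)\<^sup>2" using le ineq_aux[OF t v P] by simp
    then have "gfun t v \<le> u\<^sup>2" unfolding gfun_def by simp
    then show "v \<in> {Vfun t (u\<^sup>2)..}" using gfun_le_iff[OF t v] by simp
  next
    fix v assume "v \<in> {Vfun t (u\<^sup>2)..}"
    then have h: "Vfun t (u\<^sup>2) \<le> v" by simp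
    have v: "v > 0" using h Vfun(1)[OF t, of "u\<^sup>2"] by simp
    have P: "u\<^sup>2 + (1 + v)\<^sup>2 > 0" using v by (simp add: add_nonneg_pos)
    have "gfun t v \<le> u\<^sup>2" using gfun_le_iff[OF t v] h by simp
    then have "t * (1 + v) / v \<le> u\<^sup>2 + (1 + v)\<^sup>2" unfolding gfun_def by simp
    then have "(1 + v) / (v * (u\<^sup>2 + (1 + v)\<^sup>2)) \<le> 1 / t" using ineq_aux[OF t v P] by simp
    then show "v \<in> {v. v > 0 \<and> (\<integral>x. 1 / ((u - x)\<^sup>2 + v\<^sup>2) \<partial>cauchy_measure) \<le> 1 / t}"
      using I1[OF v] v by simp
  qed
  then show ?thesis unfolding v_t_def by simp
qed

lemma psi_aux:
  fixes t w u :: real assumes t: "t > 0" and w: "w > 0" and g: "gfun t w = u\<^sup>2"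
  shows "u + t * (u / (u\<^sup>2 + (1 + w)\<^sup>2)) = u + u * w / (1 + w)"
proof -
  have "u\<^sup>2 + (1 + w)\<^sup>2 = t * (1 + w) / w" using g unfolding gfun_def by simp
  then have "t * (u / (u\<^sup>2 + (1 + w)\<^sup>2)) = t * (u / (t * (1 + w) / w))" by simp
  also have "\<dots> = u * w / (1 + w)"
  proof -
    have "t + t * w > 0" using t w by (simp add: add_pos_pos)
    then show ?thesis using t w by (simp add: field_simps)
  qed
  finally show ?thesis by simp
qed

lemma psi_eq:
  assumes t: "t > 0"
  shows "psi_t cauchy_measure t = (\<lambda>u. u + u * Vfun t (u\<^sup>2) / (1 + Vfun t (u\<^sup>2)))"
proof
  fix u :: real
  have w: "Vfun t (u\<^sup>2) > 0" "gfun t (Vfun t (u\<^sup>2)) = u\<^sup>2" using Vfun[OF t] by auto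
  show "psi_t cauchy_measure t u = u + u * Vfun t (u\<^sup>2) / (1 + Vfun t (u\<^sup>2))"
    unfolding psi_t_def vt_eq[OF t] I2[OF w(1)] using psi_aux[OF t w] .
qed

lemma gen_frac:
  fixes p K w X :: real assumes "p \<noteq> 0" "K \<noteq> 0"
  shows "1 + (1 * (w / p) + X / K / (p * p)) = (p * p * K + w * p * K + X) / (p * p * K)"
  using assms by (simp add: field_simps)

lemma final_alg:
  fixes t w u :: real assumes t: "t > 0" and w: "w > 0" and g: "u\<^sup>2 = t * (1 + w) / w - (1 + w)\<^sup>2"
  shows "1 + (1 * (w / (1 + w)) + ((inverse (- t / w\<^sup>2 - 2 * (1 + w)) * (2 * u)) * (1 + w) - w * (inverse (- t / w\<^sup>2 - 2 * (1 + w)) * (2 * u))) / ((1 + w) * (1 + w)) * u)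
    = (t + 4 * w\<^sup>2 * (1 + w)\<^sup>2) / ((1 + w) * (t + 2 * w\<^sup>2 * (1 + w)))"
proof -
  define K where "K = t + 2 * w\<^sup>2 * (1 + w)"
  have K: "K > 0" unfolding K_def using t w by (simp add: add_pos_nonneg)
  define c where "c = inverse (- t / w\<^sup>2 - 2 * (1 + w))"
  have c: "c = - (w\<^sup>2 / K)"
  proof -
    have "- t / w\<^sup>2 - 2 * (1 + w) = - (K / w\<^sup>2)" unfolding K_def using w by (simp add: field_simps)
    then show ?thesis unfolding c_def by simp
  qed
  have e1: "((c * (2 * u)) * (1 + w) - w * (c * (2 * u))) / ((1 + w) * (1 + w)) * u = 2 * c * u\<^sup>2 / ((1 + w) * (1 + w))"
    by (simp add: algebra_simps power2_eq_square)
  have e2: "2 * c * u\<^sup>2 = - 2 * w * ((1 + w) * t - w * (1 + w)\<^sup>2) / K"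
    unfolding c g using w K by (simp add: field_simps power2_eq_square)
  have n: "(1 + w) * (1 + w) * K + w * (1 + w) * K - 2 * w * ((1 + w) * t - w * (1 + w)\<^sup>2) = (1 + w) * (t + 4 * w\<^sup>2 * (1 + w)\<^sup>2)"
    unfolding K_def by (simp add: algebra_simps power2_eq_square)
  have w1: "1 + w > 0" using w by simp
  have l: "1 + (1 * (w / (1 + w)) + - 2 * w * ((1 + w) * t - w * (1 + w)\<^sup>2) / K / ((1 + w) * (1 + w)))
      = ((1 + w) * (1 + w) * K + w * (1 + w) * K - 2 * w * ((1 + w) * t - w * (1 + w)\<^sup>2)) / ((1 + w) * (1 + w) * K)"
    using gen_frac[of "1 + w" K w "- 2 * w * ((1 + w) * t - w * (1 + w)\<^sup>2)"] K w1 by simp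
  have l2: "(1 + w) * (t + 4 * w\<^sup>2 * (1 + w)\<^sup>2) / ((1 + w) * (1 + w) * K) = (t + 4 * w\<^sup>2 * (1 + w)\<^sup>2) / ((1 + w) * K)"
    using w1 by (simp add: mult.assoc)
  have "1 + (1 * (w / (1 + w)) + - 2 * w * ((1 + w) * t - w * (1 + w)\<^sup>2) / K / ((1 + w) * (1 + w)))
      = (t + 4 * w\<^sup>2 * (1 + w)\<^sup>2) / ((1 + w) * K)"
    unfolding l n l2 ..
  then show ?thesis unfolding c_def[symmetric] e1 e2 K_def by simp
qed

theorem proposition6p4:
  fixes t u :: real
  assumes "t > 0"
  shows "((psi_t cauchy_measure t) has_real_derivative
           (let v = v_t cauchy_measure t u in
              (t + 4 * v\<^sup>2 * (1 + v)\<^sup>2) / ((1 + v) * (t + 2 * v\<^sup>2 * (1 + v)))))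
         (at u)"
proof -
  have t: "t > 0" by fact
  define w where "w = Vfun t (u\<^sup>2)"
  have w: "w > 0" "gfun t w = u\<^sup>2" unfolding w_def using Vfun[OF t] by auto
  define Dw where "Dw = inverse (- t / w\<^sup>2 - 2 * (1 + w)) * (2 * u)"
  have dV: "((\<lambda>u. Vfun t (u\<^sup>2)) has_real_derivative Dw) (at u)"
    unfolding Dw_def w_def
    by (rule DERIV_chain2[OF Vfun_deriv[OF t]]) (auto intro!: derivative_eq_intros)
  have dq: "((\<lambda>u. Vfun t (u\<^sup>2) / (1 + Vfun t (u\<^sup>2))) has_real_derivative
      (Dw * (1 + w) - w * (0 + Dw)) / ((1 + w) * (1 + w))) (at u)"
    using DERIV_divide[OF dV DERIV_add[OF DERIV_const dV], of 1] w(1) unfolding w_def by simp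
  have dpsi: "((\<lambda>u. u + u * (Vfun t (u\<^sup>2) / (1 + Vfun t (u\<^sup>2)))) has_real_derivative
      1 + (1 * (w / (1 + w)) + (Dw * (1 + w) - w * (0 + Dw)) / ((1 + w) * (1 + w)) * u)) (at u)"
    using DERIV_add[OF DERIV_ident DERIV_mult[OF DERIV_ident dq]] unfolding w_def by simp
  have val: "1 + (1 * (w / (1 + w)) + (Dw * (1 + w) - w * (0 + Dw)) / ((1 + w) * (1 + w)) * u)
     = (t + 4 * w\<^sup>2 * (1 + w)\<^sup>2) / ((1 + w) * (t + 2 * w\<^sup>2 * (1 + w)))"
    unfolding Dw_def using final_alg[OF t w(1)] w(2) unfolding gfun_def by simp
  have "psi_t cauchy_measure t = (\<lambda>u. u + u * (Vfun t (u\<^sup>2) / (1 + Vfun t (u\<^sup>2))))"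
    unfolding psi_eq[OF t] by (simp add: times_divide_eq_right)
  then show ?thesis using dpsi val unfolding Let_def vt_eq[OF t] w_def by simp
qed
end
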